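(* The inequality $\frac{\sin x}{x}>M(\cos x;q)$ holds for all $x\in(0,\pi/2)$ if and only if $q\le\frac{34}{35}$, while the reverse inequality $\frac{\sin x}{x}<M(\cos x;q)$ holds for all $x\in(0,\pi/2)$ if and only if $q\ge q_0\approx0.989681$, where $q_0$ is the unique positive root of $\delta(q)=0$.
   Context: For $t\in(0,1)$ and $q\in\mathbb{R}$: $M(t;q)=\left(\frac{8}{15q}+\left(1-\frac{8}{15q}\right)t^q\right)^{5/(15q-8)}$ if $q\ne0,\frac8{15}$; $M(t;0)=\left(1-\frac8{15}\ln t\right)^{-5/8}$; $M(t;\frac8{15})=\exp\frac{5(t^{8/15}-1)}{8}$. For $q>0$ define $\delta(q)=\frac{1-(2/\pi)^{3q-8/5}}{3q-8/5}-\frac1{3q}$ if $q\ne\frac8{15}$ and $\delta(\frac8{15})=\ln\frac\pi2-\frac58$. *)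

theory Defs
  imports "HOL-Analysis.Analysis"
begin

definition M :: "real \<Rightarrow> real \<Rightarrow> real" where
  "M t q =
    (if q = 0 then (1 - 8/15 * ln t) powr (-5/8)
     else if q = 8/15 then exp (5 * (t powr (8/15) - 1) / 8)
     else (8/(15*q) + (1 - 8/(15*q)) * t powr q) powr (5 / (15*q - 8)))"

definition delta :: "real \<Rightarrow> real" where
  "delta q =
    (if q = 8/15 then ln (pi/2) - 5/8
     else (1 - (2/pi) powr (3*q - 8/5)) / (3*q - 8/5) - 1/(3*q))"

end

theory Submission
  imports Defs "HOL-Real_Asymp.Real_Asymp"
begin


definition tcoeff :: "bool \<Rightarrow> nat \<Rightarrow> real" where
  "tcoeff b m = (if b then sin_coeff m else cos_coeff m)"

definition tf :: "bool \<Rightarrow> real \<Rightarrow> real" where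
  "tf b y = (if b then sin y else cos y)"

lemma cos_taylor_bound: "\<bar>cos x - (\<Sum>m<n. cos_coeff m * x ^ m)\<bar> \<le> \<bar>x\<bar> ^ n / fact n"
proof -
  obtain t where "cos x = (\<Sum>m<n. cos_coeff m * x ^ m) + (cos(t + 1/2 * real n * pi) / fact n) * x ^ n"
    using Maclaurin_cos_expansion by blast
  then have "\<bar>cos x - (\<Sum>m<n. cos_coeff m * x ^ m)\<bar> = \<bar>cos(t + 1/2 * real n * pi)\<bar> / fact n * \<bar>x\<bar> ^ n"
    by (simp add: abs_mult power_abs)
  also have "\<dots> \<le> 1 / fact n * \<bar>x\<bar> ^ n"
    by (intro mult_right_mono divide_right_mono) auto
  finally show ?thesis by simp
qed

lemma tf_taylor_bound: "\<bar>tf b y - (\<Sum>m<n. tcoeff b m * y ^ m)\<bar> \<le> \<bar>y\<bar> ^ n / fact n"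
  using Maclaurin_sin_bound[of y n] cos_taylor_bound[of y n]
  by (cases b) (auto simp: tf_def tcoeff_def divide_inverse mult.commute)

type_synonym tterm = "real \<times> nat \<times> bool \<times> nat"

fun tsum :: "tterm list \<Rightarrow> real \<Rightarrow> real" where
  "tsum [] x = 0"
| "tsum ((a,k,b,j)#L) x = a * x ^ k * tf b (real j * x) + tsum L x"

fun tpoly :: "tterm list \<Rightarrow> nat \<Rightarrow> real \<Rightarrow> real" where
  "tpoly [] D x = 0"
| "tpoly ((a,k,b,j)#L) D x = a * x ^ k * (\<Sum>m<D-k. tcoeff b m * (real j * x) ^ m) + tpoly L D x"

fun terr :: "tterm list \<Rightarrow> nat \<Rightarrow> real" where
  "terr [] D = 0"
| "terr ((a,k,b,j)#L) D = \<bar>a\<bar> * real j ^ (D-k) / fact (D-k) + terr L D"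

fun tco :: "tterm list \<Rightarrow> nat \<Rightarrow> real" where
  "tco [] n = 0"
| "tco ((a,k,b,j)#L) n = (if k \<le> n then a * tcoeff b (n-k) * real j ^ (n-k) else 0) + tco L n"

lemma tsum_bound:
  assumes "x \<ge> 0" "\<forall>(a,k,b,j)\<in>set L. k \<le> D"
  shows "\<bar>tsum L x - tpoly L D x\<bar> \<le> terr L D * x ^ D"
  using assms(2)
proof (induction L)
  case Nil then show ?case by simp
next
  case (Cons t L)
  obtain a k b j where t: "t = (a,k,b,j)" by (cases t) auto
  have kD: "k \<le> D" using Cons.prems t by auto
  have IH: "\<bar>tsum L x - tpoly L D x\<bar> \<le> terr L D * x ^ D" using Cons by auto
  have "\<bar>tf b (real j * x) - (\<Sum>m<D-k. tcoeff b m * (real j * x) ^ m)\<bar> \<le> \<bar>real j * x\<bar> ^ (D-k) / fact (D-k)"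
    by (rule tf_taylor_bound)
  also have "\<dots> = real j ^ (D-k) * x^(D-k) / fact (D-k)" using assms(1) by (simp add: power_mult_distrib)
  finally have e: "\<bar>tf b (real j * x) - (\<Sum>m<D-k. tcoeff b m * (real j * x) ^ m)\<bar> \<le> real j ^ (D-k) * x^(D-k) / fact (D-k)" .
  have "\<bar>a * x ^ k * tf b (real j * x) - a * x ^ k * (\<Sum>m<D-k. tcoeff b m * (real j * x) ^ m)\<bar>
       = \<bar>a\<bar> * x^k * \<bar>tf b (real j * x) - (\<Sum>m<D-k. tcoeff b m * (real j * x) ^ m)\<bar>"
    using assms(1) by (simp add: abs_mult right_diff_distrib[symmetric])
  also have "\<dots> \<le> \<bar>a\<bar> * x^k * (real j ^ (D-k) * x^(D-k) / fact (D-k))"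
    using e assms(1) by (intro mult_left_mono) auto
  also have "\<dots> = \<bar>a\<bar> * real j ^ (D-k) / fact (D-k) * x ^ D"
    using kD by (simp add: power_add[symmetric] field_simps)
  finally have h: "\<bar>a * x ^ k * tf b (real j * x) - a * x ^ k * (\<Sum>m<D-k. tcoeff b m * (real j * x) ^ m)\<bar>
     \<le> \<bar>a\<bar> * real j ^ (D-k) / fact (D-k) * x ^ D" .
  show ?case using h IH unfolding t by (simp add: algebra_simps) (smt (verit))
qed

lemma tpoly_eq: "\<forall>(a,k,b,j)\<in>set L. k \<le> D \<Longrightarrow> tpoly L D x = (\<Sum>n<D. tco L n * x ^ n)"
proof (induction L)
  case Nil then show ?case by simp
next
  case (Cons t L)
  obtain a k b j where t: "t = (a,k,b,j)" by (cases t) auto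
  have kD: "k \<le> D" using Cons.prems t by auto
  have "(\<Sum>m<D-k. tcoeff b m * (real j * x) ^ m) * x^k = (\<Sum>m<D-k. tcoeff b m * real j ^ m * x ^ (m+k))"
    by (simp add: sum_distrib_right sum_distrib_left power_mult_distrib power_add mult_ac)
  also have "\<dots> = (\<Sum>n\<in>{k..<D}. tcoeff b (n-k) * real j ^ (n-k) * x ^ n)"
    by (rule sum.reindex_bij_witness[where i="\<lambda>n. n-k" and j="\<lambda>m. m+k"]) (use kD in auto)
  also have "\<dots> = (\<Sum>n<D. (if k \<le> n then tcoeff b (n-k) * real j ^ (n-k) else 0) * x ^ n)"
    by (rule sum.mono_neutral_cong_left) auto
  finally have e: "(\<Sum>m<D-k. tcoeff b m * (real j * x) ^ m) * x^k = (\<Sum>n<D. (if k \<le> n then tcoeff b (n-k) * real j ^ (n-k) else 0) * x ^ n)" .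
  have "a * x ^ k * (\<Sum>m<D-k. tcoeff b m * (real j * x) ^ m) = (\<Sum>n<D. (if k \<le> n then a * tcoeff b (n-k) * real j ^ (n-k) else 0) * x ^ n)"
  proof -
    have "a * x ^ k * (\<Sum>m<D-k. tcoeff b m * (real j * x) ^ m) = a * ((\<Sum>m<D-k. tcoeff b m * (real j * x) ^ m) * x^k)"
      by (simp add: mult_ac)
    also have "\<dots> = a * (\<Sum>n<D. (if k \<le> n then tcoeff b (n-k) * real j ^ (n-k) else 0) * x ^ n)"
      using e by simp
    also have "\<dots> = (\<Sum>n<D. (if k \<le> n then a * tcoeff b (n-k) * real j ^ (n-k) else 0) * x ^ n)"
      unfolding sum_distrib_left by (rule sum.cong) auto
    finally show ?thesis .
  qed
  then show ?case using Cons t by (simp add: sum.distrib distrib_right)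
qed


definition LV :: "tterm list" where
 "LV = [(-3/4,0,False,1),(3/4,0,False,3),(9/4,1,True,1),(5/4,1,True,3),(-5/2,2,False,1),(-1/2,2,False,3)]"

lemma mult_angles:
  fixes x :: real
  shows
  "sin (2*x) = 2 * sin x * cos x" "cos (2*x) = 2 * cos x ^ 2 - 1"
  "sin (3*x) = sin x * (4 * cos x ^ 2 - 1)" "cos (3*x) = 4 * cos x ^ 3 - 3 * cos x"
  "sin (4*x) = sin x * (8 * cos x ^ 3 - 4 * cos x)" "cos (4*x) = 8 * cos x ^ 4 - 8 * cos x ^ 2 + 1"
  "sin (5*x) = sin x * (16 * cos x ^ 4 - 12 * cos x ^ 2 + 1)" "cos (5*x) = 16 * cos x ^ 5 - 20 * cos x ^ 3 + 5 * cos x"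
  "sin (6*x) = sin x * (32 * cos x ^ 5 - 32 * cos x ^ 3 + 6 * cos x)" "cos (6*x) = 32 * cos x ^ 6 - 48 * cos x ^ 4 + 18 * cos x ^ 2 - 1"
proof -
  have sc: "sin x ^ 2 = 1 - cos x ^ 2" using sin_cos_squared_add[of x] by linarith
  have a: "sin (real (Suc n) * x) = sin (real n * x) * cos x + cos (real n * x) * sin x"
      "cos (real (Suc n) * x) = cos (real n * x) * cos x - sin (real n * x) * sin x" for n
    by (simp_all add: distrib_right sin_add cos_add)
  have s2: "sin (2*x) = 2 * sin x * cos x" by (simp add: sin_double)
  have c2: "cos (2*x) = 2 * cos x ^ 2 - 1" by (simp add: cos_double sc)
  have b3: "sin (3*x) = sin (2*x) * cos x + cos (2*x) * sin x" "cos (3*x) = cos (2*x) * cos x - sin (2*x) * sin x"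
    using a[of 2] by simp_all
  have b4: "sin (4*x) = sin (3*x) * cos x + cos (3*x) * sin x" "cos (4*x) = cos (3*x) * cos x - sin (3*x) * sin x"
    using a[of 3] by simp_all
  have b5: "sin (5*x) = sin (4*x) * cos x + cos (4*x) * sin x" "cos (5*x) = cos (4*x) * cos x - sin (4*x) * sin x"
    using a[of 4] by simp_all
  have b6: "sin (6*x) = sin (5*x) * cos x + cos (5*x) * sin x" "cos (6*x) = cos (5*x) * cos x - sin (5*x) * sin x"
    using a[of 5] by simp_all
  have s3: "sin (3*x) = sin x * (4 * cos x ^ 2 - 1)" using b3 s2 c2 sc by algebra
  have c3: "cos (3*x) = 4 * cos x ^ 3 - 3 * cos x" using b3 s2 c2 sc by algebra
  have s4: "sin (4*x) = sin x * (8 * cos x ^ 3 - 4 * cos x)" using b4 s3 c3 sc by algebra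
  have c4: "cos (4*x) = 8 * cos x ^ 4 - 8 * cos x ^ 2 + 1" using b4 s3 c3 sc by algebra
  have s5: "sin (5*x) = sin x * (16 * cos x ^ 4 - 12 * cos x ^ 2 + 1)" using b5 s4 c4 sc by algebra
  have c5: "cos (5*x) = 16 * cos x ^ 5 - 20 * cos x ^ 3 + 5 * cos x" using b5 s4 c4 sc by algebra
  have s6: "sin (6*x) = sin x * (32 * cos x ^ 5 - 32 * cos x ^ 3 + 6 * cos x)" using b6 s5 c5 sc by algebra
  have c6: "cos (6*x) = 32 * cos x ^ 6 - 48 * cos x ^ 4 + 18 * cos x ^ 2 - 1" using b6 s5 c5 sc by algebra
  show "sin (2*x) = 2 * sin x * cos x" "cos (2*x) = 2 * cos x ^ 2 - 1"
  "sin (3*x) = sin x * (4 * cos x ^ 2 - 1)" "cos (3*x) = 4 * cos x ^ 3 - 3 * cos x"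
  "sin (4*x) = sin x * (8 * cos x ^ 3 - 4 * cos x)" "cos (4*x) = 8 * cos x ^ 4 - 8 * cos x ^ 2 + 1"
  "sin (5*x) = sin x * (16 * cos x ^ 4 - 12 * cos x ^ 2 + 1)" "cos (5*x) = 16 * cos x ^ 5 - 20 * cos x ^ 3 + 5 * cos x"
  "sin (6*x) = sin x * (32 * cos x ^ 5 - 32 * cos x ^ 3 + 6 * cos x)" "cos (6*x) = 32 * cos x ^ 6 - 48 * cos x ^ 4 + 18 * cos x ^ 2 - 1"
    by fact+
qed

lemma tf_num:
  "tf True (real 0 * x) = 0" "tf False (real 0 * x) = 1"
  "tf True (real 1 * x) = sin x" "tf False (real 1 * x) = cos x"
  "tf b (real (numeral n) * x) = (if b then sin (numeral n * x) else cos (numeral n * x))"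
  by (auto simp: tf_def)

lemma LV_id: "tsum LV x = (sin x - x * cos x) * (x * sin x ^ 2 + 3 * x * cos x ^ 2 - 3 * sin x * cos x)"
proof -
  have sc: "sin x ^ 2 = 1 - cos x ^ 2" using sin_cos_squared_add[of x] by linarith
  show ?thesis
    unfolding LV_def using sc by (simp add: tf_def mult_angles) algebra
qed

lemma tco_LV: "(\<Sum>n<16. tco LV n * x ^ n) = 4/45 * x^8 - 122/4725 * x^10 + 97/28350 * x^12 - 3613/13097700 * x^14"
  by (simp add: LV_def tcoeff_def sin_coeff_def cos_coeff_def lessThan_nat_numeral fact_numeral)

lemma terr_LV: "terr LV 16 = 39698671/929901772800"
  by (simp add: LV_def fact_numeral)

lemma V_pos:
  fixes x :: real
  assumes x: "0 < x" "x \<le> 8/5"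
  shows "(sin x - x * cos x) * (x * sin x ^ 2 + 3 * x * cos x ^ 2 - 3 * sin x * cos x) > 0"
proof -
  have k: "\<forall>(a,k,b,j)\<in>set LV. k \<le> 16" by (simp add: LV_def)
  have b: "\<bar>tsum LV x - tpoly LV 16 x\<bar> \<le> terr LV 16 * x ^ 16"
    using tsum_bound[OF _ k] x by simp
  have p: "tpoly LV 16 x = 4/45 * x^8 - 122/4725 * x^10 + 97/28350 * x^12 - 3613/13097700 * x^14"
    using tpoly_eq[OF k] tco_LV by simp
  define y where "y = x^2"
  have y0: "0 \<le> y" unfolding y_def by simp
  have "x^2 \<le> (8/5)^2" using x by (intro power_mono) auto
  then have y1: "y \<le> 64/25" unfolding y_def by (simp add: power2_eq_square)
  have x8: "x^8 > 0" using x by simp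
  have g1: "4/45 - 122/4725 * y \<ge> 4/45 - 122/4725 * (64/25)" using y1 by simp
  have g2: "y^2 * (97/28350 - 3613/13097700 * y) \<ge> 0" using y0 y1 by (intro mult_nonneg_nonneg) auto
  have xe: "x^8 \<le> (8/5)^8" using x by (intro power_mono) auto
  have "tpoly LV 16 x - terr LV 16 * x^16 = x^8 * ((4/45 - 122/4725 * y) + y^2 * (97/28350 - 3613/13097700 * y) - terr LV 16 * x^8)"
    unfolding p y_def by (simp add: algebra_simps flip: power_add power_mult)
  also have "\<dots> > 0"
  proof (rule mult_pos_pos[OF x8])
    have "terr LV 16 * x^8 \<le> terr LV 16 * (8/5)^8" using xe by (simp add: terr_LV)
    also have "\<dots> \<le> 3/1000" by (simp add: terr_LV power_divide)
    finally have "terr LV 16 * x^8 \<le> 3/1000" .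
    then show "0 < (4/45 - 122/4725 * y) + y^2 * (97/28350 - 3613/13097700 * y) - terr LV 16 * x^8"
      using g1 g2 by linarith
  qed
  finally show ?thesis using b LV_id[of x] by linarith
qed


fun tder :: "tterm list \<Rightarrow> tterm list" where
  "tder [] = []"
| "tder ((a,k,b,j)#L) = (real k * a, k-1, b, j) # (a * real j * (if b then 1 else -1), k, \<not>b, j) # tder L"

lemma tsum_deriv: "((\<lambda>x. tsum L x) has_real_derivative tsum (tder L) x) (at x)"
proof (induction L rule: tder.induct)
  case 1 then show ?case by simp
next
  case (2 a k b j L)
  have d: "((\<lambda>x. tf b (real j * x)) has_real_derivative (real j * (if b then 1 else -1) * tf (\<not>b) (real j * x))) (at x)"
    by (cases b) (auto simp: tf_def intro!: derivative_eq_intros)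
  have p: "((\<lambda>x. x ^ k) has_real_derivative real k * x ^ (k-1)) (at x)"
    using DERIV_pow[of k x UNIV] by simp
  have "((\<lambda>x. a * x ^ k * tf b (real j * x) + tsum L x) has_real_derivative
       a * (real k * x ^ (k-1)) * tf b (real j * x) + a * x^k * (real j * (if b then 1 else -1) * tf (\<not>b) (real j * x)) + tsum (tder L) x) (at x)"
    by (rule derivative_eq_intros p d 2 refl | simp)+
  then show ?case by (simp add: algebra_simps)
qed

definition LW :: "tterm list" where
 "LW = [(-3/20,0,False,1),(3/20,0,False,3),(9/5,1,True,1),(4/5,1,True,3),(-16/5,2,False,1),(-2/5,2,False,3)]"

definition LG :: "tterm list" where
 "LG = [(-39/32,0,True,2),(3/10,0,True,4),(33/160,0,True,6),(81/40,1,False,0),(57/40,1,False,2),(-129/40,1,False,4),(-9/40,1,False,6),(-119/20,2,True,2),(-37/10,2,True,4),(-1/20,2,True,6),(3,3,False,0),(4,3,False,2),(2,3,False,4),(6/5,4,True,2),(3/5,4,True,4)]"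

lemma LW_id: "tsum LW x = -(3/5) * sin x ^ 2 * cos x + x * sin x * (sin x ^ 2 + 21/5 * cos x ^ 2) - x^2 * cos x * (2 * sin x ^ 2 + 18/5 * cos x ^ 2)"
proof -
  have sc: "sin x ^ 2 = 1 - cos x ^ 2" using sin_cos_squared_add[of x] by linarith
  show ?thesis
    unfolding LW_def apply (simp add: tf_def mult_angles)
    using sc by algebra
qed

lemma LG_id: "tsum (tder LW) x * tsum LV x - tsum LW x * tsum (tder LV) x = tsum LG x"
proof -
  have sc: "sin x ^ 2 = 1 - cos x ^ 2" using sin_cos_squared_add[of x] by linarith
  show ?thesis
    unfolding LW_def LV_def LG_def apply (simp add: tf_def mult_angles)
    using sc by algebra
qed

lemma tco_LG: "(\<Sum>n<30. tco LG n * x ^ n) = (128/826875) * x^17 + (-128/1819125) * x^19 + (571264/37246584375) * x^21 + (-4352/2031631875) * x^23 + (2508416/11608518796875) * x^25 + (-707072/42036495125625) * x^27 + (41122304/39018274775605125) * x^29"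
  by (simp add: LG_def tcoeff_def sin_coeff_def cos_coeff_def lessThan_nat_numeral fact_numeral)

lemma terr_LG: "terr LG 30 = 1557311398036466/731958448368617391796875"
  by (simp add: LG_def fact_numeral)

lemma G_pos:
  fixes x :: real
  assumes x: "0 < x" "x \<le> 8/5"
  shows "tsum LG x > 0"
proof -
  have k: "\<forall>(a,k,b,j)\<in>set LG. k \<le> 30" by (simp add: LG_def)
  have b: "\<bar>tsum LG x - tpoly LG 30 x\<bar> \<le> terr LG 30 * x ^ 30"
    using tsum_bound[OF _ k] x by simp
  have p: "tpoly LG 30 x = (128/826875) * x^17 + (-128/1819125) * x^19 + (571264/37246584375) * x^21 + (-4352/2031631875) * x^23 + (2508416/11608518796875) * x^25 + (-707072/42036495125625) * x^27 + (41122304/39018274775605125) * x^29"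
    using tpoly_eq[OF k] tco_LG by simp
  define y where "y = x^2"
  have y0: "0 \<le> y" unfolding y_def by simp
  have "x^2 \<le> (8/5)^2" using x by (intro power_mono) auto
  then have y1: "y \<le> 64/25" unfolding y_def by (simp add: power2_eq_square)
  have x17: "x^17 > 0" using x by simp
  have g1: "(128/826875) + (-128/1819125) * y + (3/5) * (571264/37246584375) * y^2 = (571264/62077640625) * (y - 34125/8926)^2 + 823904/40593774375"
    by (simp add: power2_eq_square algebra_simps)
  have g1': "(571264/62077640625) * (y - 34125/8926)^2 \<ge> 0" by simp
  have g2: "y^2 * ((2/5) * (571264/37246584375) + (-4352/2031631875) * y) \<ge> 0" using y0 y1 by (intro mult_nonneg_nonneg) auto
  have g3: "y^4 * ((2508416/11608518796875) + (-707072/42036495125625) * y) \<ge> 0" using y0 y1 by (intro mult_nonneg_nonneg) auto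
  have g4: "(41122304/39018274775605125) * y^6 \<ge> 0" using y0 by simp
  have xe: "x^13 \<le> (8/5)^13" using x by (intro power_mono) auto
  have "tpoly LG 30 x - terr LG 30 * x^30 = x^17 * (((128/826875) + (-128/1819125) * y + (3/5) * (571264/37246584375) * y^2)
     + y^2 * ((2/5) * (571264/37246584375) + (-4352/2031631875) * y)
     + y^4 * ((2508416/11608518796875) + (-707072/42036495125625) * y)
     + (41122304/39018274775605125) * y^6 - terr LG 30 * x^13)"
    unfolding p y_def by (simp add: algebra_simps flip: power_add power_mult)
  also have "\<dots> > 0"
  proof (rule mult_pos_pos[OF x17])
    have "terr LG 30 * x^13 \<le> terr LG 30 * (8/5)^13" using xe by (simp add: terr_LG)
    also have "\<dots> \<le> 1/1000000" by (simp add: terr_LG power_divide)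
    finally have "terr LG 30 * x^13 \<le> 1/1000000" .
    then show "0 < ((128/826875) + (-128/1819125) * y + (3/5) * (571264/37246584375) * y^2)
     + y^2 * ((2/5) * (571264/37246584375) + (-4352/2031631875) * y)
     + y^4 * ((2508416/11608518796875) + (-707072/42036495125625) * y)
     + (41122304/39018274775605125) * y^6 - terr LG 30 * x^13"
      using g1 g1' g2 g3 g4 by linarith
  qed
  finally show ?thesis using b by linarith
qed


lemma pi_half_lt: "pi / 2 < 8/5"
  using pi_approx by simp

lemma inc_gt_lim_left:
  fixes f :: "real \<Rightarrow> real"
  assumes inc: "\<And>x y. a < x \<Longrightarrow> x < y \<Longrightarrow> y < b \<Longrightarrow> f x < f y"
    and lim: "(f \<longlongrightarrow> L) (at_right a)" and x: "a < x" "x < b"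
  shows "L < f x"
proof -
  define m where "m = (a + x) / 2"
  have m: "a < m" "m < x" using x by (auto simp: m_def)
  have "L \<le> f m"
  proof (rule tendsto_le[OF _ tendsto_const lim])
    show "at_right a \<noteq> bot" by simp
    show "\<forall>\<^sub>F y in at_right a. f y \<le> f m"
      unfolding eventually_at_right_field using m x
      by (intro exI[of _ m]) (auto intro!: less_imp_le inc)
  qed
  also have "f m < f x" using m x by (intro inc) auto
  finally show ?thesis .
qed

lemma inc_lt_lim_right:
  fixes f :: "real \<Rightarrow> real"
  assumes inc: "\<And>x y. a < x \<Longrightarrow> x < y \<Longrightarrow> y < b \<Longrightarrow> f x < f y"
    and lim: "(f \<longlongrightarrow> L) (at_left b)" and x: "a < x" "x < b"
  shows "f x < L"
proof -
  define m where "m = (b + x) / 2"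
  have m: "x < m" "m < b" using x by (auto simp: m_def)
  have "f x < f m" using m x by (intro inc) auto
  also have "f m \<le> L"
  proof (rule tendsto_le[OF _ lim tendsto_const])
    show "at_left b \<noteq> bot" by simp
    show "\<forall>\<^sub>F y in at_left b. f m \<le> f y"
      unfolding eventually_at_left_field using m x
      by (intro exI[of _ m]) (auto intro!: less_imp_le inc)
  qed
  finally show ?thesis .
qed

lemma dec_lt_lim_left:
  fixes f :: "real \<Rightarrow> real"
  assumes dec: "\<And>x y. a < x \<Longrightarrow> x < y \<Longrightarrow> y < b \<Longrightarrow> f x > f y"
    and lim: "(f \<longlongrightarrow> L) (at_right a)" and x: "a < x" "x < b"
  shows "f x < L"
proof -
  have "-L < - f x"
    by (rule inc_gt_lim_left[of a b "\<lambda>x. - f x"]) (use dec lim x in \<open>auto intro: tendsto_minus\<close>)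
  then show ?thesis by simp
qed

lemma deriv_pos_inc:
  fixes f :: "real \<Rightarrow> real"
  assumes "\<And>t. a < t \<Longrightarrow> t < b \<Longrightarrow> (f has_real_derivative f' t) (at t)"
    and "\<And>t. a < t \<Longrightarrow> t < b \<Longrightarrow> f' t > 0"
    and "a < x" "x < y" "y < b"
  shows "f x < f y"
proof (rule DERIV_pos_imp_increasing[OF \<open>x<y\<close>])
  fix t assume "x \<le> t" "t \<le> y"
  then have "a < t" "t < b" using assms(3-5) by auto
  then show "\<exists>d. (f has_real_derivative d) (at t) \<and> 0 < d" using assms(1,2) by blast
qed

lemma deriv_neg_dec:
  fixes f :: "real \<Rightarrow> real"
  assumes "\<And>t. a < t \<Longrightarrow> t < b \<Longrightarrow> (f has_real_derivative f' t) (at t)"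
    and "\<And>t. a < t \<Longrightarrow> t < b \<Longrightarrow> f' t < 0"
    and "a < x" "x < y" "y < b"
  shows "f x > f y"
proof -
  have "- f x < - f y"
    by (rule deriv_pos_inc[of a b "\<lambda>x. - f x" "\<lambda>t. - f' t"]) (use assms in \<open>auto intro: derivative_intros\<close>)
  then show ?thesis by simp
qed

definition Rf :: "real \<Rightarrow> real" where "Rf x = tsum LW x / tsum LV x"

lemma V_pos': "0 < x \<Longrightarrow> x < pi/2 \<Longrightarrow> tsum LV x > 0"
  using V_pos[of x] LV_id[of x] pi_half_lt by simp

lemma G_pos': "0 < x \<Longrightarrow> x < pi/2 \<Longrightarrow> tsum LG x > 0"
  using G_pos[of x] pi_half_lt by simp

lemma Rf_deriv:
  assumes "0 < x" "x < pi/2"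
  shows "(Rf has_real_derivative tsum LG x / (tsum LV x)^2) (at x)"
proof -
  have V: "tsum LV x \<noteq> 0" using V_pos'[OF assms] by simp
  have "((\<lambda>x. tsum LW x / tsum LV x) has_real_derivative
      (tsum (tder LW) x * tsum LV x - tsum LW x * tsum (tder LV) x) / (tsum LV x * tsum LV x)) (at x)"
    by (rule DERIV_divide[OF tsum_deriv tsum_deriv V])
  then show ?thesis unfolding Rf_def[abs_def] LG_id by (simp add: power2_eq_square)
qed

lemma Rf_inc: assumes "0 < x" "x < y" "y < pi/2" shows "Rf x < Rf y"
proof (rule deriv_pos_inc[of 0 "pi/2" Rf "\<lambda>x. tsum LG x / (tsum LV x)^2"])
  fix t assume t: "0 < t" "t < pi/2"
  show "(Rf has_real_derivative tsum LG t / (tsum LV t)\<^sup>2) (at t)" by (rule Rf_deriv[OF t])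
  show "0 < tsum LG t / (tsum LV t)\<^sup>2" using G_pos'[OF t] V_pos'[OF t] by simp
qed (use assms in auto)

lemma Rf_lim: "(Rf \<longlongrightarrow> 34/35) (at_right 0)"
proof -
  have "((\<lambda>x::real. (-(3/5) * sin x ^ 2 * cos x + x * sin x * (sin x ^ 2 + 21/5 * cos x ^ 2) - x^2 * cos x * (2 * sin x ^ 2 + 18/5 * cos x ^ 2)) / ((sin x - x * cos x) * (x * sin x ^ 2 + 3 * x * cos x ^ 2 - 3 * sin x * cos x))) \<longlongrightarrow> 34/35) (at_right 0)"
    by real_asymp
  then show ?thesis unfolding Rf_def[abs_def] LW_id LV_id .
qed

lemma Rf_gt: "0 < x \<Longrightarrow> x < pi/2 \<Longrightarrow> Rf x > 34/35"
  by (rule inc_gt_lim_left[of 0 "pi/2" Rf, OF Rf_inc Rf_lim]) auto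


lemma sin_pos': "0 < x \<Longrightarrow> x < pi/2 \<Longrightarrow> sin x > 0"
  by (rule sin_gt_zero) auto
lemma cos_pos': "0 < x \<Longrightarrow> x < pi/2 \<Longrightarrow> cos x > 0"
  by (rule cos_gt_zero) auto

lemma S_pos:
  assumes "0 < x" "x < pi/2"
  shows "sin x - x * cos x > 0"
proof -
  have d: "((\<lambda>t. sin t - t * cos t) has_real_derivative t * sin t) (at t)" for t
    by (rule derivative_eq_intros refl | simp)+
  have "(\<lambda>t. sin t - t * cos t) 0 < (\<lambda>t. sin t - t * cos t) x"
  proof (rule DERIV_pos_imp_increasing_open[OF assms(1)])
    fix t assume "0 < t" "t < x"
    then show "\<exists>y. ((\<lambda>t. sin t - t * cos t) has_real_derivative y) (at t) \<and> 0 < y"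
      using d[of t] sin_pos'[of t] assms by (intro exI[of _ "t * sin t"]) auto
  next
    show "continuous_on {0..x} (\<lambda>t. sin t - t * cos t)" by (intro continuous_intros)
  qed
  then show ?thesis by simp
qed

lemma deriv_pos_inc2:
  fixes f :: "real \<Rightarrow> real"
  assumes "\<And>t. x \<le> t \<Longrightarrow> t \<le> y \<Longrightarrow> (f has_real_derivative f' t) (at t)"
    and "\<And>t. x < t \<Longrightarrow> t < y \<Longrightarrow> f' t > 0" and "x < y"
  shows "f x < f y"
proof (rule DERIV_pos_imp_increasing_open[OF \<open>x<y\<close>])
  show "continuous_on {x..y} f" by (rule DERIV_atLeastAtMost_imp_continuous_on) (use assms(1) in blast)
next
  fix t assume "x < t" "t < y"
  then show "\<exists>d. (f has_real_derivative d) (at t) \<and> 0 < d" using assms(1)[of t] assms(2)[of t] by auto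
qed

lemma deriv_neg_dec2:
  fixes f :: "real \<Rightarrow> real"
  assumes "\<And>t. x \<le> t \<Longrightarrow> t \<le> y \<Longrightarrow> (f has_real_derivative f' t) (at t)"
    and "\<And>t. x < t \<Longrightarrow> t < y \<Longrightarrow> f' t < 0" and "x < y"
  shows "f x > f y"
proof -
  have "- f x < - f y"
    by (rule deriv_pos_inc2[of x y "\<lambda>x. - f x" "\<lambda>t. - f' t"]) (use assms in \<open>auto intro: derivative_intros\<close>)
  then show ?thesis by simp
qed

definition Hq :: "real \<Rightarrow> real \<Rightarrow> real" where
  "Hq q x = (q - 1) * ln (cos x) + ln (sin x) + 2 * ln x - ln 3 - ln (sin x - x * cos x)
     - (3*q - 13/5) * (ln (sin x) - ln x)"

lemma Hq_alg:
  fixes s c x q :: real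
  assumes "s > 0" "c > 0" "s - x * c > 0" "x > 0"
  shows "(q - 1) * (- s / c) + c / s + 2 * (1/x) - (c - (c - x * s)) / (s - x * c)
     - (3*q - 13/5) * (c / s - 1/x) = ((-(3/5) * s ^ 2 * c + x * s * (s ^ 2 + 21/5 * c ^ 2) - x^2 * c * (2 * s ^ 2 + 18/5 * c ^ 2)) - q * ((s - x * c) * (x * s ^ 2 + 3 * x * c ^ 2 - 3 * s * c))) / (x * (s - x * c) * s * c)"
proof -
  have d: "x * (s - x * c) * s * c \<noteq> 0" using assms by simp
  have "((q - 1) * (- s / c) + c / s + 2 * (1/x) - (c - (c - x * s)) / (s - x * c)
     - (3*q - 13/5) * (c / s - 1/x)) * (x * (s - x * c) * s * c) = 
     ((-(3/5) * s ^ 2 * c + x * s * (s ^ 2 + 21/5 * c ^ 2) - x^2 * c * (2 * s ^ 2 + 18/5 * c ^ 2)) - q * ((s - x * c) * (x * s ^ 2 + 3 * x * c ^ 2 - 3 * s * c)))"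
    using assms by (simp add: field_simps) (simp add: algebra_simps power2_eq_square)
  then show ?thesis using d by (simp add: eq_divide_eq)
qed

lemma Hq_deriv:
  assumes x: "0 < x" "x < pi/2"
  shows "(Hq q has_real_derivative (tsum LW x - q * tsum LV x) / (x * (sin x - x * cos x) * sin x * cos x)) (at x)"
proof -
  have s: "sin x > 0" and c: "cos x > 0" and S: "sin x - x * cos x > 0"
    using sin_pos'[OF x] cos_pos'[OF x] S_pos[OF x] by auto
  have "(Hq q has_real_derivative
     (q - 1) * (- sin x / cos x) + cos x / sin x + 2 * (1/x) - (cos x - (cos x - x * sin x)) / (sin x - x * cos x)
     - (3*q - 13/5) * (cos x / sin x - 1/x)) (at x)"
    unfolding Hq_def[abs_def]
    apply (rule derivative_eq_intros refl | use s c S x in force)+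
    using s c S x apply (simp add: field_simps)
    done
  also have "(q - 1) * (- sin x / cos x) + cos x / sin x + 2 * (1/x) - (cos x - (cos x - x * sin x)) / (sin x - x * cos x)
     - (3*q - 13/5) * (cos x / sin x - 1/x) = (tsum LW x - q * tsum LV x) / (x * (sin x - x * cos x) * sin x * cos x)"
    unfolding LW_id LV_id by (rule Hq_alg[OF s c S x(1)])
  finally show ?thesis .
qed

lemma Hq_deriv_sign:
  assumes x: "0 < x" "x < pi/2"
  shows "(tsum LW x - q * tsum LV x) / (x * (sin x - x * cos x) * sin x * cos x) > 0 \<longleftrightarrow> Rf x > q"
    and "(tsum LW x - q * tsum LV x) / (x * (sin x - x * cos x) * sin x * cos x) < 0 \<longleftrightarrow> Rf x < q"
proof -
  have s: "sin x > 0" and c: "cos x > 0" and S: "sin x - x * cos x > 0" and V: "tsum LV x > 0"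
    using sin_pos'[OF x] cos_pos'[OF x] S_pos[OF x] V_pos'[OF x] by auto
  have den: "x * (sin x - x * cos x) * sin x * cos x > 0" using s c S x by simp
  have e: "tsum LW x - q * tsum LV x = tsum LV x * (Rf x - q)"
    unfolding Rf_def using V by (simp add: field_simps)
  have a1: "A / (x * (sin x - x * cos x) * sin x * cos x) > 0 \<longleftrightarrow> A > 0" for A
    using den by (simp add: pos_less_divide_eq)
  have a2: "A / (x * (sin x - x * cos x) * sin x * cos x) < 0 \<longleftrightarrow> A < 0" for A
    using den by (simp add: pos_divide_less_eq)
  have b1: "tsum LV x * (Rf x - q) > 0 \<longleftrightarrow> Rf x > q" using V by (simp add: zero_less_mult_iff)
  have b2: "tsum LV x * (Rf x - q) < 0 \<longleftrightarrow> Rf x < q" using V by (simp add: mult_less_0_iff)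
  show "(tsum LW x - q * tsum LV x) / (x * (sin x - x * cos x) * sin x * cos x) > 0 \<longleftrightarrow> Rf x > q"
    unfolding e a1 b1 ..
  show "(tsum LW x - q * tsum LV x) / (x * (sin x - x * cos x) * sin x * cos x) < 0 \<longleftrightarrow> Rf x < q"
    unfolding e a2 b2 ..
qed

lemma Hq_lim: "(Hq q \<longlongrightarrow> 0) (at_right 0)"
proof -
  have ev: "\<forall>\<^sub>F x in at_right 0. Hq q x = (q - 1) * ln (cos x) + ln (x^2 * sin x / (3 * (sin x - x * cos x)))
      - (3*q - 13/5) * ln (sin x / x)"
  proof -
    have "\<forall>\<^sub>F x in at_right 0. x < pi/2 \<and> 0 < x"
      unfolding eventually_at_right_field by (intro exI[of _ "pi/2"]) auto
    then show ?thesis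
    proof eventually_elim
      case (elim x)
      have s: "sin x > 0" and S: "sin x - x * cos x > 0"
        using sin_pos'[of x] S_pos[of x] elim by auto
      have x0: "x > 0" using elim by simp
      have "ln (x^2 * sin x / (3 * (sin x - x * cos x))) = ln (x^2 * sin x) - ln (3 * (sin x - x * cos x))"
        by (rule ln_divide_pos) (use s S x0 in auto)
      also have "ln (x^2 * sin x) = ln (x^2) + ln (sin x)" by (rule ln_mult_pos) (use s x0 in auto)
      also have "ln (x^2) = 2 * ln x" using x0 by (simp add: ln_realpow)
      also have "ln (3 * (sin x - x * cos x)) = ln 3 + ln (sin x - x * cos x)" by (rule ln_mult_pos) (use S in auto)
      finally have e1: "ln (x^2 * sin x / (3 * (sin x - x * cos x))) = 2 * ln x + ln (sin x) - (ln 3 + ln (sin x - x * cos x))" .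
      have e2: "ln (sin x / x) = ln (sin x) - ln x" by (rule ln_divide_pos) (use s x0 in auto)
      show ?case unfolding Hq_def e1 e2 by (simp add: algebra_simps)
    qed
  qed
  have l1: "((\<lambda>x::real. x^2 * sin x / (3 * (sin x - x * cos x))) \<longlongrightarrow> 1) (at_right 0)"
    by real_asymp
  have l2: "((\<lambda>x::real. sin x / x) \<longlongrightarrow> 1) (at_right 0)"
    by real_asymp
  have l3: "((\<lambda>x::real. cos x) \<longlongrightarrow> 1) (at_right 0)"
    by real_asymp
  have "((\<lambda>x. (q - 1) * ln (cos x) + ln (x^2 * sin x / (3 * (sin x - x * cos x)))
      - (3*q - 13/5) * ln (sin x / x)) \<longlongrightarrow> (q - 1) * ln 1 + ln 1 - (3*q - 13/5) * ln 1) (at_right 0)"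
    by (intro tendsto_intros l1 l2 l3) auto
  then have "((\<lambda>x. (q - 1) * ln (cos x) + ln (x^2 * sin x / (3 * (sin x - x * cos x)))
      - (3*q - 13/5) * ln (sin x / x)) \<longlongrightarrow> 0) (at_right 0)" by simp
  then show ?thesis using tendsto_cong[OF ev] by simp
qed


lemma Hq_deriv_t: "0 < t \<Longrightarrow> t < pi/2 \<Longrightarrow>
  (Hq q has_real_derivative (tsum LW t - q * tsum LV t) / (t * (sin t - t * cos t) * sin t * cos t)) (at t)"
  by (rule Hq_deriv)

lemma Hq_pos:
  assumes q: "q \<le> 34/35" and x: "0 < x" "x < pi/2"
  shows "Hq q x > 0"
proof (rule inc_gt_lim_left[of 0 "pi/2" "Hq q" 0, OF _ Hq_lim x])
  fix u v assume uv: "0 < u" "u < v" "v < pi/2"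
  show "Hq q u < Hq q v"
  proof (rule deriv_pos_inc[of 0 "pi/2" "Hq q" "\<lambda>t. (tsum LW t - q * tsum LV t) / (t * (sin t - t * cos t) * sin t * cos t)"])
    fix t assume t: "0 < t" "t < pi/2"
    show "(Hq q has_real_derivative (tsum LW t - q * tsum LV t) / (t * (sin t - t * cos t) * sin t * cos t)) (at t)"
      by (rule Hq_deriv[OF t])
    show "(tsum LW t - q * tsum LV t) / (t * (sin t - t * cos t) * sin t * cos t) > 0"
      unfolding Hq_deriv_sign(1)[OF t] using Rf_gt[OF t] q by linarith
  qed (use uv in auto)
qed

lemma Hq_neg_upto:
  assumes b: "0 < b" "b < pi/2" and R: "Rf b \<le> q"
  shows "Hq q b < 0"
proof -
  define D where "D = (\<lambda>t. (tsum LW t - q * tsum LV t) / (t * (sin t - t * cos t) * sin t * cos t))"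
  have der: "0 < t \<Longrightarrow> t < pi/2 \<Longrightarrow> (Hq q has_real_derivative D t) (at t)" for t
    unfolding D_def by (rule Hq_deriv)
  have neg: "0 < t \<Longrightarrow> t < b \<Longrightarrow> D t < 0" for t
    unfolding D_def using Hq_deriv_sign(2)[of t q] Rf_inc[of t b] R b by auto
  have "Hq q b < Hq q (b/2)"
    by (rule deriv_neg_dec2[of "b/2" b "Hq q" D]) (use der neg b in auto)
  also have "Hq q (b/2) < 0"
  proof (rule dec_lt_lim_left[of 0 b "Hq q" 0, OF _ Hq_lim])
    fix u v assume "0 < u" "u < v" "v < b"
    then show "Hq q u > Hq q v"
      by (intro deriv_neg_dec[of 0 b "Hq q" D]) (use der neg b in auto)
  qed (use b in auto)
  finally show ?thesis .
qed

lemma Hq_up: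
  assumes "0 < y" "y < z" "z < pi/2" "Hq q y \<ge> 0"
  shows "Hq q z > 0"
proof -
  have R: "Rf y > q"
  proof (rule ccontr)
    assume "\<not> Rf y > q"
    then have "Hq q y < 0" using Hq_neg_upto[of y q] assms by auto
    then show False using assms by simp
  qed
  define D where "D = (\<lambda>t. (tsum LW t - q * tsum LV t) / (t * (sin t - t * cos t) * sin t * cos t))"
  have "Hq q y < Hq q z"
  proof (rule deriv_pos_inc2[of y z "Hq q" D])
    fix t assume "y \<le> t" "t \<le> z"
    then show "(Hq q has_real_derivative D t) (at t)" unfolding D_def using assms by (intro Hq_deriv) auto
  next
    fix t assume t: "y < t" "t < z"
    then have "Rf t > q" using Rf_inc[of y t] R assms by auto
    then show "D t > 0" unfolding D_def using Hq_deriv_sign(1)[of t q] t assms by auto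
  qed (use assms in auto)
  then show ?thesis using assms by simp
qed

lemma Hq_exists_neg:
  assumes q: "q > 34/35"
  shows "\<exists>b. 0 < b \<and> b < pi/2 \<and> (\<forall>x. 0 < x \<and> x \<le> b \<longrightarrow> Hq q x < 0)"
proof -
  have "\<forall>\<^sub>F x in at_right 0. Rf x < q" using order_tendstoD(2)[OF Rf_lim q] .
  then obtain d where d: "d > 0" "\<And>y. y > 0 \<Longrightarrow> y < d \<Longrightarrow> Rf y < q"
    unfolding eventually_at_right_field by auto
  define b where "b = min d (pi/2) / 2"
  have b: "0 < b" "b < d" "b < pi/2" using d by (auto simp: b_def min_def)
  show ?thesis
  proof (intro exI[of _ b] conjI allI impI)
    fix x assume x: "0 < x \<and> x \<le> b"
    then show "Hq q x < 0" using Hq_neg_upto[of x q] d(2)[of x] b by auto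
  qed (use b in auto)
qed

definition Lf :: "real \<Rightarrow> real \<Rightarrow> real" where
  "Lf r u = (if r = 0 then ln u else (u powr r - 1) / r)"

definition Ff :: "real \<Rightarrow> real \<Rightarrow> real" where
  "Ff q x = 3 * Lf (3*q - 8/5) (sin x / x) - Lf q (cos x)"

lemma Lf_deriv:
  assumes "0 < u"
  shows "(Lf r has_real_derivative u powr (r - 1)) (at u)"
proof (cases "r = 0")
  case True
  have "(ln has_real_derivative 1 / u) (at u)" using assms by (rule DERIV_ln_divide)
  moreover have "u powr (0 - 1) = 1 / u" using assms by (simp add: powr_minus_divide)
  ultimately show ?thesis using True unfolding Lf_def[abs_def] by simp
next
  case False
  have "((\<lambda>u. u powr r) has_real_derivative r * u powr (r-1)) (at u)" by (rule has_real_derivative_powr[OF assms])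
  then have "((\<lambda>u. u powr r - 1) has_real_derivative r * u powr (r-1) - 0) (at u)" by (intro DERIV_diff DERIV_const)
  then have "((\<lambda>u. (u powr r - 1) / r) has_real_derivative (r * u powr (r - 1) - 0) / r) (at u)"
    by (rule DERIV_cdivide)
  then show ?thesis using False unfolding Lf_def[abs_def] by simp
qed

lemma Lf_mono:
  assumes "0 < u" "u < v"
  shows "Lf r u < Lf r v"
proof -
  consider "r = 0" | "r > 0" | "r < 0" by linarith
  then show ?thesis
  proof cases
    case 1 then show ?thesis using assms by (simp add: Lf_def)
  next
    case 2
    have "u powr r < v powr r" using assms 2 by (intro powr_less_mono2) auto
    then show ?thesis using 2 by (simp add: Lf_def divide_strict_right_mono)
  next
    case 3
    have "v powr r < u powr r" using assms 3 by (intro powr_less_mono2_neg) auto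
    then show ?thesis using 3 by (simp add: Lf_def divide_strict_right_mono_neg)
  qed
qed

lemma Lf_one [simp]: "Lf r 1 = 0" by (simp add: Lf_def)

lemma Lf_tendsto:
  assumes "(f \<longlongrightarrow> a) F" "a > 0"
  shows "((\<lambda>x. Lf r (f x)) \<longlongrightarrow> Lf r a) F"
proof (cases "r = 0")
  case True then show ?thesis using tendsto_ln[OF assms(1)] assms(2) by (simp add: Lf_def)
next
  case False
  have "((\<lambda>x. (f x powr r - 1) / r) \<longlongrightarrow> (a powr r - 1) / r) F"
    by (intro tendsto_intros assms) (use assms False in auto)
  then show ?thesis using False by (simp add: Lf_def)
qed

lemma Ff_deriv:
  assumes x: "0 < x" "x < pi/2"
  shows "(Ff q has_real_derivative cos x powr (q - 1) * sin x - 3 * (sin x / x) powr (3*q - 13/5) * (sin x - x * cos x) / x^2) (at x)"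
proof -
  have s: "sin x > 0" and c: "cos x > 0" using sin_pos'[OF x] cos_pos'[OF x] by auto
  have u: "sin x / x > 0" using s x by simp
  have d1: "((\<lambda>x. sin x / x) has_real_derivative (cos x * x - sin x * 1) / (x * x)) (at x)"
    by (rule derivative_eq_intros refl | use x in simp)+
  have d2: "((\<lambda>x. Lf (3*q - 8/5) (sin x / x)) has_real_derivative (sin x / x) powr (3*q - 8/5 - 1) * ((cos x * x - sin x * 1) / (x * x))) (at x)"
    by (rule DERIV_chain2[OF Lf_deriv[OF u] d1])
  have d3: "((\<lambda>x. Lf q (cos x)) has_real_derivative cos x powr (q - 1) * (- sin x)) (at x)"
    by (rule DERIV_chain2[where f="Lf q" and g=cos, OF Lf_deriv[OF c]]) (rule DERIV_cos)
  have "(Ff q has_real_derivative 3 * ((sin x / x) powr (3*q - 8/5 - 1) * ((cos x * x - sin x * 1) / (x * x))) - cos x powr (q - 1) * (- sin x)) (at x)"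
    unfolding Ff_def[abs_def] by (intro DERIV_diff DERIV_cmult d2 d3)
  moreover have "3 * ((sin x / x) powr (3*q - 8/5 - 1) * ((cos x * x - sin x * 1) / (x * x))) - cos x powr (q - 1) * (- sin x)
     = cos x powr (q - 1) * sin x - 3 * (sin x / x) powr (3*q - 13/5) * (sin x - x * cos x) / x^2"
  proof -
    have e: "3*q - 8/5 - 1 = 3*q - 13/5" by simp
    show ?thesis unfolding e using x by (simp add: field_simps power2_eq_square)
  qed
  ultimately show ?thesis by simp
qed

lemma Ff_deriv_sign:
  assumes x: "0 < x" "x < pi/2"
  shows "cos x powr (q - 1) * sin x - 3 * (sin x / x) powr (3*q - 13/5) * (sin x - x * cos x) / x^2 > 0 \<longleftrightarrow> Hq q x > 0"
    and "cos x powr (q - 1) * sin x - 3 * (sin x / x) powr (3*q - 13/5) * (sin x - x * cos x) / x^2 < 0 \<longleftrightarrow> Hq q x < 0"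
proof -
  have s: "sin x > 0" and c: "cos x > 0" and S: "sin x - x * cos x > 0"
    using sin_pos'[OF x] cos_pos'[OF x] S_pos[OF x] by auto
  define A where "A = cos x powr (q - 1) * sin x"
  define B where "B = 3 * (sin x / x) powr (3*q - 13/5) * (sin x - x * cos x) / x^2"
  have A: "A > 0" unfolding A_def using s c by simp
  have B: "B > 0" unfolding B_def using s S x by simp
  have lA: "ln A = (q - 1) * ln (cos x) + ln (sin x)"
    unfolding A_def using s c by (simp add: ln_mult_pos)
  have "ln B = ln (3 * (sin x / x) powr (3*q - 13/5) * (sin x - x * cos x)) - ln (x^2)"
    unfolding B_def by (rule ln_divide_pos) (use s S x in auto)
  also have "ln (3 * (sin x / x) powr (3*q - 13/5) * (sin x - x * cos x)) = ln (3 * (sin x / x) powr (3*q - 13/5)) + ln (sin x - x * cos x)"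
    by (rule ln_mult_pos) (use s S x in auto)
  also have "ln (3 * (sin x / x) powr (3*q - 13/5)) = ln 3 + (3*q - 13/5) * ln (sin x / x)"
    using s x by (simp add: ln_mult_pos)
  also have "ln (sin x / x) = ln (sin x) - ln x" by (rule ln_divide_pos) (use s x in auto)
  also have "ln (x^2) = 2 * ln x" using x by (simp add: ln_realpow)
  finally have lB: "ln B = ln 3 + (3*q - 13/5) * (ln (sin x) - ln x) + ln (sin x - x * cos x) - 2 * ln x" .
  have H: "Hq q x = ln A - ln B" unfolding lA lB Hq_def by (simp add: algebra_simps)
  show "cos x powr (q - 1) * sin x - 3 * (sin x / x) powr (3*q - 13/5) * (sin x - x * cos x) / x^2 > 0 \<longleftrightarrow> Hq q x > 0"
    unfolding A_def[symmetric] B_def[symmetric] H using A B by (simp add: ln_less_cancel_iff)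
  show "cos x powr (q - 1) * sin x - 3 * (sin x / x) powr (3*q - 13/5) * (sin x - x * cos x) / x^2 < 0 \<longleftrightarrow> Hq q x < 0"
    unfolding A_def[symmetric] B_def[symmetric] H using A B by (simp add: ln_less_cancel_iff)
qed


definition FD :: "real \<Rightarrow> real \<Rightarrow> real" where
  "FD q x = cos x powr (q - 1) * sin x - 3 * (sin x / x) powr (3*q - 13/5) * (sin x - x * cos x) / x^2"

lemma Ff_deriv': "0 < x \<Longrightarrow> x < pi/2 \<Longrightarrow> (Ff q has_real_derivative FD q x) (at x)"
  unfolding FD_def by (rule Ff_deriv)

lemma FD_pos: "0 < x \<Longrightarrow> x < pi/2 \<Longrightarrow> FD q x > 0 \<longleftrightarrow> Hq q x > 0"
  unfolding FD_def by (rule Ff_deriv_sign(1))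
lemma FD_neg: "0 < x \<Longrightarrow> x < pi/2 \<Longrightarrow> FD q x < 0 \<longleftrightarrow> Hq q x < 0"
  unfolding FD_def by (rule Ff_deriv_sign(2))

lemma Ff_lim0: "(Ff q \<longlongrightarrow> 0) (at_right 0)"
proof -
  have l2: "((\<lambda>x::real. sin x / x) \<longlongrightarrow> 1) (at_right 0)" by real_asymp
  have l3: "((\<lambda>x::real. cos x) \<longlongrightarrow> 1) (at_right 0)" by real_asymp
  have "((\<lambda>x. 3 * Lf (3*q - 8/5) (sin x / x) - Lf q (cos x)) \<longlongrightarrow> 3 * Lf (3*q - 8/5) 1 - Lf q 1) (at_right 0)"
    by (intro tendsto_intros Lf_tendsto l2 l3) auto
  then show ?thesis unfolding Ff_def[abs_def] by simp
qed

lemma Ff_limpi: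
  assumes q: "q > 0"
  shows "(Ff q \<longlongrightarrow> -3 * delta q) (at_left (pi/2))"
proof -
  have l0: "((\<lambda>x::real. sin x / x) \<longlongrightarrow> sin (pi/2) / (pi/2)) (at_left (pi/2))"
    by (intro tendsto_divide tendsto_sin tendsto_ident_at) auto
  then have l1: "((\<lambda>x::real. sin x / x) \<longlongrightarrow> 2/pi) (at_left (pi/2))" by simp
  have l2: "((\<lambda>x::real. cos x) \<longlongrightarrow> 0) (at_left (pi/2))"
    using tendsto_cos[OF tendsto_ident_at[of "pi/2" "{..<pi/2}"]] by simp
  have ev: "\<forall>\<^sub>F x in at_left (pi/2). 0 \<le> cos x"
    unfolding eventually_at_left_field
    by (intro exI[of _ 0]) (auto intro!: cos_ge_zero)
  have l3: "((\<lambda>x. cos x powr q) \<longlongrightarrow> 0) (at_left (pi/2))"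
    by (rule tendsto_zero_powrI[OF l2 tendsto_const ev q])
  have l4: "((\<lambda>x. Lf q (cos x)) \<longlongrightarrow> (0 - 1) / q) (at_left (pi/2))"
  proof -
    have "((\<lambda>x. (cos x powr q - 1) / q) \<longlongrightarrow> (0 - 1) / q) (at_left (pi/2))"
      by (intro tendsto_intros l3) (use q in auto)
    then show ?thesis using q by (simp add: Lf_def)
  qed
  have "(Ff q \<longlongrightarrow> 3 * Lf (3*q - 8/5) (2/pi) - (0 - 1) / q) (at_left (pi/2))"
    unfolding Ff_def[abs_def]
    by (intro tendsto_diff tendsto_mult tendsto_const Lf_tendsto l1 l4) auto
  moreover have "3 * Lf (3*q - 8/5) (2/pi) - (0 - 1) / q = -3 * delta q"
  proof (cases "q = 8/15")
    case True
    have "ln (2/pi) = - ln (pi/2)" by (simp add: ln_div)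
    then show ?thesis unfolding True by (simp add: Lf_def delta_def)
  next
    case False
    then have "3*q - 8/5 \<noteq> 0" by simp
    then show ?thesis using False q by (simp add: Lf_def delta_def field_simps)
  qed
  ultimately show ?thesis by simp
qed

lemma Ff_pos:
  assumes q: "q \<le> 34/35" and x: "0 < x" "x < pi/2"
  shows "Ff q x > 0"
proof (rule inc_gt_lim_left[of 0 "pi/2" "Ff q" 0, OF _ Ff_lim0 x])
  fix u v assume uv: "0 < u" "u < v" "v < pi/2"
  show "Ff q u < Ff q v"
  proof (rule deriv_pos_inc[of 0 "pi/2" "Ff q" "FD q"])
    fix t assume t: "0 < t" "t < pi/2"
    show "(Ff q has_real_derivative FD q t) (at t)" by (rule Ff_deriv'[OF t])
    show "FD q t > 0" unfolding FD_pos[OF t] by (rule Hq_pos[OF q t])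
  qed (use uv in auto)
qed

lemma Ff_neg_exists:
  assumes q: "q > 34/35"
  shows "\<exists>x. 0 < x \<and> x < pi/2 \<and> Ff q x < 0"
proof -
  obtain b where b: "0 < b" "b < pi/2" "\<And>x. 0 < x \<Longrightarrow> x \<le> b \<Longrightarrow> Hq q x < 0"
    using Hq_exists_neg[OF q] by blast
  have neg: "0 < t \<Longrightarrow> t \<le> b \<Longrightarrow> FD q t < 0" for t
    using FD_neg[of t q] b by auto
  have "Ff q b < Ff q (b/2)"
    by (rule deriv_neg_dec2[of "b/2" b "Ff q" "FD q"]) (use neg b Ff_deriv' in auto)
  also have "Ff q (b/2) < 0"
  proof (rule dec_lt_lim_left[of 0 b "Ff q" 0, OF _ Ff_lim0])
    fix u v assume "0 < u" "u < v" "v < b"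
    then show "Ff q u > Ff q v"
      by (intro deriv_neg_dec[of 0 b "Ff q" "FD q"]) (use neg b Ff_deriv' in auto)
  qed (use b in auto)
  finally show ?thesis using b by auto
qed

lemma Ff_neg:
  assumes q: "q > 0" and d: "delta q \<ge> 0" and x: "0 < x" "x < pi/2"
  shows "Ff q x < 0"
proof (rule ccontr)
  assume "\<not> Ff q x < 0"
  then have F0: "Ff q x \<ge> 0" by simp
  show False
  proof (cases "\<exists>y. 0 < y \<and> y < x \<and> Hq q y \<ge> 0")
    case True
    then obtain y where y: "0 < y" "y < x" "Hq q y \<ge> 0" by blast
    have "Ff q x < -3 * delta q"
    proof (rule inc_lt_lim_right[of y "pi/2" "Ff q", OF _ Ff_limpi[OF q]])
      fix u v assume uv: "y < u" "u < v" "v < pi/2"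
      show "Ff q u < Ff q v"
      proof (rule deriv_pos_inc[of y "pi/2" "Ff q" "FD q"])
        fix t assume t: "y < t" "t < pi/2"
        then show "(Ff q has_real_derivative FD q t) (at t)" using y by (intro Ff_deriv') auto
        show "FD q t > 0" using FD_pos[of t q] Hq_up[of y t q] t y by auto
      qed (use uv in auto)
    qed (use x y in auto)
    then show False using d F0 by simp
  next
    case False
    then have neg: "0 < t \<Longrightarrow> t < x \<Longrightarrow> FD q t < 0" for t
      using FD_neg[of t q] x by force
    have "Ff q x < Ff q (x/2)"
      by (rule deriv_neg_dec2[of "x/2" x "Ff q" "FD q"]) (use neg x Ff_deriv' in auto)
    also have "Ff q (x/2) < 0"
    proof (rule dec_lt_lim_left[of 0 x "Ff q" 0, OF _ Ff_lim0])
      fix u v assume "0 < u" "u < v" "v < x"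
      then show "Ff q u > Ff q v"
        by (intro deriv_neg_dec[of 0 x "Ff q" "FD q"]) (use neg x Ff_deriv' in auto)
    qed (use x in auto)
    finally show False using F0 by simp
  qed
qed

lemma Ff_pos_exists:
  assumes q: "q > 0" and d: "delta q < 0"
  shows "\<exists>x. 0 < x \<and> x < pi/2 \<and> Ff q x > 0"
proof -
  have "\<forall>\<^sub>F x in at_left (pi/2). Ff q x > 0"
    using order_tendstoD(1)[OF Ff_limpi[OF q]] d by simp
  then obtain b where b: "b < pi/2" "\<And>y. b < y \<Longrightarrow> y < pi/2 \<Longrightarrow> Ff q y > 0"
    unfolding eventually_at_left_field by auto
  define y where "y = (max b 0 + pi/2) / 2"
  have "0 < y" "y < pi/2" "b < y" using b by (auto simp: y_def max_def)
  then show ?thesis using b by blast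
qed


lemma Lf_iff:
  assumes "0 < u" "0 < m"
  shows "u > m \<longleftrightarrow> Lf r u > Lf r m" "u < m \<longleftrightarrow> Lf r u < Lf r m"
  using Lf_mono[of u m r] Lf_mono[of m u r] assms
  by (metis less_linear order.asym)+

lemma M_key:
  assumes t: "0 < t" "t < 1"
  shows "M t q > 0 \<and> Lf (3*q - 8/5) (M t q) = Lf q t / 3"
proof -
  have lt: "ln t < 0" using t by simp
  consider "q = 0" | "q = 8/15" | "q \<noteq> 0" "q \<noteq> 8/15" by blast
  then show ?thesis
  proof cases
    case 1
    define b where "b = 1 - 8/15 * ln t"
    have b: "b > 0" unfolding b_def using lt by simp
    have m: "M t q = b powr (-5/8)" unfolding M_def b_def using 1 by simp
    have "M t q powr (-8/5) = b" unfolding m using b by (simp add: powr_powr)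
    then have "Lf (3*q - 8/5) (M t q) = (b - 1) / (-8/5)" using 1 by (simp add: Lf_def)
    also have "\<dots> = Lf q t / 3" unfolding b_def using 1 by (simp add: Lf_def)
    finally show ?thesis using b m by simp
  next
    case 2
    have m: "M t q = exp (5 * (t powr (8/15) - 1) / 8)" unfolding M_def using 2 by simp
    show ?thesis unfolding m unfolding 2 by (simp add: Lf_def)
  next
    case 3
    define a where "a = 8 / (15 * q)"
    define B where "B = a + (1 - a) * t powr q"
    have m: "M t q = B powr (5 / (15 * q - 8))" unfolding M_def B_def a_def using 3 by simp
    have B: "B > 0"
    proof -
      consider "q > 8/15" | "0 < q" "q < 8/15" | "q < 0" using 3 by linarith
      then show ?thesis
      proof cases
        case 1
        then have "0 < a" "a < 1" unfolding a_def by (auto simp: field_simps)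
        then show ?thesis unfolding B_def using t by (simp add: add_pos_nonneg)
      next
        case 2
        then have a1: "a > 1" unfolding a_def by (auto simp: field_simps)
        have tq: "t powr q < 1" using powr_less_mono2[of q t 1] t 2 by simp
        have "B = a * (1 - t powr q) + t powr q" unfolding B_def by (simp add: algebra_simps)
        moreover have "a * (1 - t powr q) > 0" using a1 tq by simp
        ultimately show ?thesis using t by (simp add: add_pos_nonneg)
      next
        case 4: 3
        then have a0: "a < 0" unfolding a_def by (simp add: divide_neg_pos)
        have tq: "t powr q > 1" using powr_less_mono2_neg[of q t 1] t 4 by simp
        have "B = 1 + (1 - a) * (t powr q - 1)" unfolding B_def by (simp add: algebra_simps)
        moreover have "(1 - a) * (t powr q - 1) > 0" using a0 tq by simp
        ultimately show ?thesis by simp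
      qed
    qed
    have r: "3*q - 8/5 \<noteq> 0" using 3 by simp
    have e: "5 / (15 * q - 8) * (3*q - 8/5) = 1" using 3 by (simp add: field_simps)
    have "M t q powr (3*q - 8/5) = B" unfolding m using B 3 by (simp add: powr_powr e)
    then have "Lf (3*q - 8/5) (M t q) = (B - 1) / (3*q - 8/5)" using r by (simp add: Lf_def)
    also have "\<dots> = Lf q t / 3" unfolding B_def a_def using 3 r by (simp add: Lf_def field_simps)
    finally show ?thesis using B m by simp
  qed
qed

lemma M_equiv:
  assumes u: "0 < u" and t: "0 < t" "t < 1"
  shows "u > M t q \<longleftrightarrow> 3 * Lf (3*q - 8/5) u - Lf q t > 0"
    and "u < M t q \<longleftrightarrow> 3 * Lf (3*q - 8/5) u - Lf q t < 0"
  using Lf_iff[OF u, of "M t q" "3*q - 8/5"] M_key[OF t, of q] by auto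

lemma F_equiv:
  assumes x: "0 < x" "x < pi/2"
  shows "sin x / x > M (cos x) q \<longleftrightarrow> Ff q x > 0"
    and "sin x / x < M (cos x) q \<longleftrightarrow> Ff q x < 0"
proof -
  have u: "sin x / x > 0" using sin_pos'[OF x] x by simp
  have c: "0 < cos x" "cos x < 1" using cos_pos'[OF x] cos_monotone_0_pi[of 0 x] x by auto
  show "sin x / x > M (cos x) q \<longleftrightarrow> Ff q x > 0" unfolding Ff_def by (rule M_equiv(1)[OF u c])
  show "sin x / x < M (cos x) q \<longleftrightarrow> Ff q x < 0" unfolding Ff_def by (rule M_equiv(2)[OF u c])
qed


definition gg :: "real \<Rightarrow> real" where
  "gg q = ln (8/15) - ln q + (3*q - 8/5) * ln (pi/2)"

lemma kappa_bounds: "0 < ln (pi/2)" "ln (pi/2) < 5/8"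
proof -
  show "0 < ln (pi/2)" using pi_gt3 by simp
  have "1 + 5/8 + (5/8)^2/2 \<le> exp (5/8::real)" by (rule exp_lower_Taylor_quadratic) simp
  moreover have "pi/2 < 1 + 5/8 + (5/8)^2/2" using pi_approx by (simp add: power2_eq_square)
  ultimately have "pi/2 < exp (5/8)" by simp
  then have "ln (pi/2) < ln (exp (5/8))" using pi_gt_zero by (subst ln_less_cancel_iff) auto
  then show "ln (pi/2) < 5/8" by simp
qed

lemma gg_deriv: "0 < q \<Longrightarrow> (gg has_real_derivative (- 1/q + 3 * ln (pi/2))) (at q)"
  unfolding gg_def[abs_def]
  by (rule derivative_eq_intros refl | simp)+

lemma gg_8_15: "gg (8/15) = 0" by (simp add: gg_def)

lemma gg_2: "gg 2 > 0"
proof -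
  have k: "ln (pi/2) > ln (3/2)" using pi_gt3 by (subst ln_less_cancel_iff) auto
  have k0: "ln (3/2::real) > 0" by simp
  have "ln ((3/2::real)^4) = 4 * ln (3/2)" by (simp add: ln_realpow)
  moreover have "ln (15/4::real) < ln ((3/2)^4)" by (subst ln_less_cancel_iff) (auto simp: power_divide)
  ultimately have "ln (15/4::real) < 4 * ln (3/2)" by simp
  moreover have "ln (8/15) - ln 2 = - ln (15/4::real)"
  proof -
    have "ln ((8/15) / 2) = ln (8/15) - ln (2::real)" by (rule ln_divide_pos) auto
    moreover have "ln (1 / (15/4)) = ln 1 - ln (15/4::real)" by (rule ln_divide_pos) auto
    ultimately show ?thesis by simp
  qed
  moreover have "gg 2 = ln (8/15) - ln 2 + 22/5 * ln (pi/2)" by (simp add: gg_def)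
  ultimately show ?thesis using k k0 by linarith
qed

definition qs :: real where "qs = 1 / (3 * ln (pi/2))"

lemma qs_gt: "qs > 8/15"
  using kappa_bounds unfolding qs_def by (simp add: field_simps)

lemma gg_dec: "0 < a \<Longrightarrow> a < b \<Longrightarrow> b \<le> qs \<Longrightarrow> gg a > gg b"
proof (rule deriv_neg_dec2[of a b gg "\<lambda>q. - 1/q + 3 * ln (pi/2)"])
  fix t assume "0 < a" "a \<le> t" "t \<le> b"
  then show "(gg has_real_derivative - 1 / t + 3 * ln (pi / 2)) (at t)" by (intro gg_deriv) auto
next
  fix t assume t: "0 < a" "a < t" "t < b" "b \<le> qs"
  then have "t < 1 / (3 * ln (pi/2))" unfolding qs_def by simp
  then have "t * (3 * ln (pi/2)) < 1" using kappa_bounds by (simp add: field_simps)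
  then show "- 1 / t + 3 * ln (pi / 2) < 0" using t by (simp add: field_simps)
qed

lemma gg_inc: "qs \<le> a \<Longrightarrow> a < b \<Longrightarrow> gg a < gg b"
proof (rule deriv_pos_inc2[of a b gg "\<lambda>q. - 1/q + 3 * ln (pi/2)"])
  have qs0: "qs > 0" using qs_gt by simp
  fix t assume "qs \<le> a" "a \<le> t" "t \<le> b"
  then show "(gg has_real_derivative - 1 / t + 3 * ln (pi / 2)) (at t)" using qs0 by (intro gg_deriv) auto
next
  have qs0: "qs > 0" using qs_gt by simp
  fix t assume t: "qs \<le> a" "a < t" "t < b"
  then have "t > 1 / (3 * ln (pi/2))" unfolding qs_def by simp
  then have "t * (3 * ln (pi/2)) > 1" using kappa_bounds by (simp add: field_simps)
  then show "- 1 / t + 3 * ln (pi / 2) > 0" using t qs0 by (simp add: field_simps)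
qed

lemma gg_qs: "gg qs < 0"
  using gg_dec[of "8/15" qs] qs_gt gg_8_15 by simp

lemma qs_lt2: "qs < 2"
proof (rule ccontr)
  assume "\<not> qs < 2"
  then have "gg 2 < gg (8/15)" using gg_dec[of "8/15" 2] qs_gt by auto
  then show False using gg_2 gg_8_15 by simp
qed

lemma gg_cont: "continuous_on {qs..2} gg"
  using qs_gt unfolding gg_def by (intro continuous_intros) auto

definition qz :: real where "qz = (SOME q. qs \<le> q \<and> q \<le> 2 \<and> gg q = 0)"

lemma q0_props: "qs < qz" "qz \<le> 2" "gg qz = 0"
proof -
  have "\<exists>q. qs \<le> q \<and> q \<le> 2 \<and> gg q = 0"
    using IVT'[of gg qs 0 2] gg_qs gg_2 qs_lt2 gg_cont by auto
  then have h: "qs \<le> qz \<and> qz \<le> 2 \<and> gg qz = 0" unfolding qz_def by (rule someI_ex)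
  then show "qz \<le> 2" "gg qz = 0" by auto
  show "qs < qz" using h gg_qs by (cases "qz = qs") auto
qed

lemma gg_sign:
  assumes "q > 0"
  shows "q < 8/15 \<Longrightarrow> gg q > 0"
    and "8/15 < q \<Longrightarrow> q < qz \<Longrightarrow> gg q < 0"
    and "qz < q \<Longrightarrow> gg q > 0"
proof -
  show "q < 8/15 \<Longrightarrow> gg q > 0" using gg_dec[of q "8/15"] assms qs_gt gg_8_15 by auto
  show "qz < q \<Longrightarrow> gg q > 0" using gg_inc[of qz q] q0_props by auto
  assume q: "8/15 < q" "q < qz"
  show "gg q < 0"
  proof (cases "q \<le> qs")
    case True then show ?thesis using gg_dec[of "8/15" q] q gg_8_15 by auto
  next
    case False then show ?thesis using gg_inc[of q qz] q q0_props by auto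
  qed
qed

lemma delta_form:
  assumes q: "q > 0" "q \<noteq> 8/15"
  shows "delta q = (8/(15*q) - exp (- (3*q - 8/5) * ln (pi/2))) / (3*q - 8/5)"
proof -
  have r: "3*q - 8/5 \<noteq> 0" using q by simp
  have l2: "ln (2/pi) = - ln (pi/2)" by (simp add: ln_div)
  have "(2/pi) powr (3*q - 8/5) = exp ((3*q - 8/5) * ln (2/pi))" by (simp add: powr_def)
  also have "(3*q - 8/5) * ln (2/pi) = - (3*q - 8/5) * ln (pi/2)" unfolding l2 by (simp add: algebra_simps)
  finally have "(2/pi) powr (3*q - 8/5) = exp (- (3*q - 8/5) * ln (pi/2))" .
  moreover have "1 / (3*q) = (1 - 8/(15*q)) / (3*q - 8/5)" using q r by (simp add: field_simps)
  ultimately show ?thesis using q unfolding delta_def by (simp add: diff_divide_distrib)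
qed

lemma gg_iff:
  assumes q: "q > 0"
  shows "8/(15*q) - exp (- (3*q - 8/5) * ln (pi/2)) > 0 \<longleftrightarrow> gg q > 0"
    and "8/(15*q) - exp (- (3*q - 8/5) * ln (pi/2)) = 0 \<longleftrightarrow> gg q = 0"
    and "8/(15*q) - exp (- (3*q - 8/5) * ln (pi/2)) < 0 \<longleftrightarrow> gg q < 0"
proof -
  have l: "ln (8/15) - ln q = ln ((8/15) / q)" using ln_divide_pos[of "8/15" q] q by simp
  have a: "8/(15*q) = exp (ln (8/15) - ln q)" unfolding l using q by simp
  have e: "ln (8/15) - ln q - (- (3*q - 8/5) * ln (pi/2)) = gg q" unfolding gg_def by (simp add: algebra_simps)
  show "8/(15*q) - exp (- (3*q - 8/5) * ln (pi/2)) > 0 \<longleftrightarrow> gg q > 0"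
    unfolding a e[symmetric] by simp
  show "8/(15*q) - exp (- (3*q - 8/5) * ln (pi/2)) = 0 \<longleftrightarrow> gg q = 0"
    unfolding a e[symmetric] by simp
  show "8/(15*q) - exp (- (3*q - 8/5) * ln (pi/2)) < 0 \<longleftrightarrow> gg q < 0"
    unfolding a e[symmetric] by simp
qed

lemma delta_sign:
  assumes q: "q > 0"
  shows "q < qz \<Longrightarrow> delta q < 0" and "delta q = 0 \<longleftrightarrow> q = qz" and "delta q \<ge> 0 \<longleftrightarrow> q \<ge> qz"
proof -
  have q0gt: "qz > 8/15" using q0_props qs_gt by simp
  have lt: "delta q < 0" if "q < qz"
  proof -
    consider "q < 8/15" | "q = 8/15" | "8/15 < q" by linarith
    then show ?thesis
    proof cases
      case 1
      have "gg q > 0" using gg_sign(1)[OF q 1] .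
      then have n: "8/(15*q) - exp (- (3*q - 8/5) * ln (pi/2)) > 0" using gg_iff(1)[OF q] by simp
      have "3*q - 8/5 < 0" using 1 by simp
      then show ?thesis using delta_form[OF q] 1 n by (simp add: divide_pos_neg)
    next
      case 2 then show ?thesis using kappa_bounds by (simp add: delta_def)
    next
      case 3
      have "gg q < 0" using gg_sign(2)[OF q 3 that] .
      then have n: "8/(15*q) - exp (- (3*q - 8/5) * ln (pi/2)) < 0" using gg_iff(3)[OF q] by simp
      have "3*q - 8/5 > 0" using 3 by simp
      then show ?thesis using delta_form[OF q] 3 n by (simp add: divide_neg_pos)
    qed
  qed
  have eq: "delta qz = 0"
    using delta_form[of qz] q0gt gg_iff(2)[of qz] q0_props by simp
  have gt: "delta q > 0" if "q > qz"
  proof -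
    have "gg q > 0" using gg_sign(3)[OF q that] .
    then have n: "8/(15*q) - exp (- (3*q - 8/5) * ln (pi/2)) > 0" using gg_iff(1)[OF q] by simp
    have "3*q - 8/5 > 0" using that q0gt by simp
    then show ?thesis using delta_form[OF q] that q0gt n by simp
  qed
  show "q < qz \<Longrightarrow> delta q < 0" by (rule lt)
  show "delta q = 0 \<longleftrightarrow> q = qz" using lt gt eq by (metis less_irrefl linorder_neqE_linordered_idom)
  show "delta q \<ge> 0 \<longleftrightarrow> q \<ge> qz" using lt gt eq by (metis le_less not_le)
qed

lemma qz_pos: "qz > 0" using q0_props qs_gt by simp


theorem theorem8:
  shows "(\<forall>q::real. (\<forall>x. 0 < x \<and> x < pi/2 \<longrightarrow> sin x / x > M (cos x) q) \<longleftrightarrow> q \<le> 34/35)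
    \<and> (\<exists>q0::real. q0 > 0 \<and> delta q0 = 0 \<and> (\<forall>q>0. delta q = 0 \<longrightarrow> q = q0)
         \<and> (\<forall>q::real. (\<forall>x. 0 < x \<and> x < pi/2 \<longrightarrow> sin x / x < M (cos x) q) \<longleftrightarrow> q \<ge> q0))"
proof (intro conjI allI)
  fix q :: real
  show "(\<forall>x. 0 < x \<and> x < pi/2 \<longrightarrow> sin x / x > M (cos x) q) \<longleftrightarrow> q \<le> 34/35"
  proof
    assume h: "\<forall>x. 0 < x \<and> x < pi/2 \<longrightarrow> sin x / x > M (cos x) q"
    show "q \<le> 34/35"
    proof (rule ccontr)
      assume "\<not> q \<le> 34/35"
      then obtain x where x: "0 < x" "x < pi/2" "Ff q x < 0" using Ff_neg_exists[of q] by auto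
      then show False using h F_equiv(1)[of x q] by auto
    qed
  next
    assume q: "q \<le> 34/35"
    show "\<forall>x. 0 < x \<and> x < pi/2 \<longrightarrow> sin x / x > M (cos x) q"
      using Ff_pos[OF q] F_equiv(1) by blast
  qed
next
  show "\<exists>q0::real. q0 > 0 \<and> delta q0 = 0 \<and> (\<forall>q>0. delta q = 0 \<longrightarrow> q = q0)
         \<and> (\<forall>q::real. (\<forall>x. 0 < x \<and> x < pi/2 \<longrightarrow> sin x / x < M (cos x) q) \<longleftrightarrow> q \<ge> q0)"
  proof (intro exI[of _ qz] conjI allI impI)
    show "qz > 0" by (rule qz_pos)
    show "delta qz = 0" using delta_sign(2)[OF qz_pos] by simp
    fix q :: real
    show "q > 0 \<Longrightarrow> delta q = 0 \<Longrightarrow> q = qz" using delta_sign(2) by blast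
    show "(\<forall>x. 0 < x \<and> x < pi/2 \<longrightarrow> sin x / x < M (cos x) q) \<longleftrightarrow> q \<ge> qz"
    proof
      assume h: "\<forall>x. 0 < x \<and> x < pi/2 \<longrightarrow> sin x / x < M (cos x) q"
      show "q \<ge> qz"
      proof (rule ccontr)
        assume nq: "\<not> q \<ge> qz"
        have one: "0 < (1::real)" "1 < pi/2" using pi_gt3 by auto
        show False
        proof (cases "q \<le> 34/35")
          case True
          then have "Ff q 1 > 0" using Ff_pos one by blast
          moreover have "Ff q 1 < 0"
          proof -
            have h1: "sin 1 / 1 < M (cos 1) q" using h one by blast
            show ?thesis using F_equiv(2)[OF one, of q] h1 by blast
          qed
          ultimately show False by simp
        next
          case False
          then have q0: "q > 0" by simp
          have "delta q < 0" using delta_sign(1)[OF q0] nq by simp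
          then obtain x where x: "0 < x" "x < pi/2" "Ff q x > 0" using Ff_pos_exists[OF q0] by auto
          moreover have "Ff q x < 0" using h x F_equiv(2)[of x q] by auto
          ultimately show False by simp
        qed
      qed
    next
      assume q: "q \<ge> qz"
      then have q0: "q > 0" using qz_pos by simp
      have d: "delta q \<ge> 0" using delta_sign(3)[OF q0] q by simp
      show "\<forall>x. 0 < x \<and> x < pi/2 \<longrightarrow> sin x / x < M (cos x) q"
        using Ff_neg[OF q0 d] F_equiv(2) by blast
    qed
  qed
qed


end
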